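(* Let $\mathbb{k}$ be a commutative ring, $M$ a $\mathbb{k}$-module with a descending filtration by $\mathbb{k}$-submodules $M=M_0\supseteq M_1\supseteq\cdots$, $G^{(1)}\subseteq GL^{(1)}_{\mathbb{k}}(M)$ a subgroup and $T\subseteq \mathrm{End}^{(1)}_{\mathbb{k}}(M)$ a $\mathbb{k}$-submodule such that the pair $(T,G^{(1)})$ is of pointwise weak Lie type, i.e. for every $i\ge1$: (a) for every $\xi\in T^{(i)}$ and $z\in M$ there exists $g\in G^{(i)}$ such that, if $\mathrm{ord}(\xi(z))<\infty$, then $\mathrm{ord}((g-\mathrm{Id}-\xi)(z))\ge 2\,\mathrm{ord}(\xi)+\mathrm{ord}(z)$; (b) for every $g\in G^{(i)}$ and $z\in M$ there exists $\xi\in T^{(i)}$ such that, if $\mathrm{ord}((g-\mathrm{Id})(z))<\infty$, then $\mathrm{ord}((g-\mathrm{Id}-\xi)(z))\ge 2\,\mathrm{ord}(g-\mathrm{Id})+\mathrm{ord}(z)$. Let $z\in M$ and $N\ge 0$ an integer. Then: 1. If $\overline{T^{(k)}(z)}\supseteq M_{N+k+\mathrm{ord}(z)}$ for every $k\ge1$, then $\overline{G^{(k)}z}\supseteq\{z\}+M_{N+k+\mathrm{ord}(z)}$ for every $k>N$. 2. If $\overline{G^{(k)}z}\supseteq\{z\}+M_{N+k+\mathrm{ord}(z)}$ for every $k\ge1$, then $\overline{T^{(k)}(z)}\supseteq M_{N+k+\mathrm{ord}(z)}$ for every $k>N$.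
   Context: For $z\in M$, $\mathrm{ord}(z)=\sup\{j: z\in M_j\}$. For $i\ge0$, $\mathrm{End}^{(i)}_{\mathbb{k}}(M)=\{\phi\in \mathrm{End}_{\mathbb{k}}(M): \phi(M_j)\subseteq M_{j+i}\ \forall j\ge 0\}$, and for $\phi\in\mathrm{End}_{\mathbb{k}}(M)$, $\mathrm{ord}(\phi)=\sup\{j:\phi\in\mathrm{End}^{(j)}_{\mathbb{k}}(M)\}$. $GL^{(0)}_{\mathbb{k}}(M)$ is the group of $\mathbb{k}$-linear automorphisms $g$ with $g(M_j)\subseteq M_j$, $g^{-1}(M_j)\subseteq M_j$ for all $j$; for $i\ge1$, $GL^{(i)}_{\mathbb{k}}(M)=\{g\in GL^{(0)}_{\mathbb{k}}(M): g-\mathrm{Id},g^{-1}-\mathrm{Id}\in\mathrm{End}^{(i)}_{\mathbb{k}}(M)\}$. $G^{(i)}=G^{(1)}\cap GL^{(i)}_{\mathbb{k}}(M)$, $T^{(i)}=T\cap\mathrm{End}^{(i)}_{\mathbb{k}}(M)$, $T^{(k)}(z)=\{\xi(z):\xi\in T^{(k)}\}$, $G^{(k)}z$ is the orbit of $z$. For $X\subseteq M$, $\overline{X}=\bigcap_{j\ge1}(X+M_j)$. *)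

theory Defs
  imports Complex_Main "HOL-Library.Extended_Nat"
begin

definition filtration :: "('k::comm_ring_1 \<Rightarrow> 'm::ab_group_add \<Rightarrow> 'm) \<Rightarrow> (nat \<Rightarrow> 'm set) \<Rightarrow> bool" where
  "filtration s Mf \<longleftrightarrow> module s \<and> Mf 0 = UNIV \<and> (\<forall>j. module.subspace s (Mf j))
     \<and> (\<forall>j. Mf (Suc j) \<subseteq> Mf j)"

definition ordv :: "(nat \<Rightarrow> 'm set) \<Rightarrow> 'm \<Rightarrow> enat" where
  "ordv Mf z = Sup {enat j | j. z \<in> Mf j}"

definition Mfe :: "(nat \<Rightarrow> 'm set) \<Rightarrow> enat \<Rightarrow> 'm set" where
  "Mfe Mf e = (case e of enat n \<Rightarrow> Mf n | \<infinity> \<Rightarrow> (\<Inter>j. Mf j))"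

definition End_ord :: "('k::comm_ring_1 \<Rightarrow> 'm::ab_group_add \<Rightarrow> 'm) \<Rightarrow> (nat \<Rightarrow> 'm set) \<Rightarrow> nat \<Rightarrow> ('m \<Rightarrow> 'm) set" where
  "End_ord s Mf i = {\<phi>. module_hom s s \<phi> \<and> (\<forall>j. \<phi> ` Mf j \<subseteq> Mf (j + i))}"

definition ordE :: "('k::comm_ring_1 \<Rightarrow> 'm::ab_group_add \<Rightarrow> 'm) \<Rightarrow> (nat \<Rightarrow> 'm set) \<Rightarrow> ('m \<Rightarrow> 'm) \<Rightarrow> enat" where
  "ordE s Mf \<phi> = Sup {enat j | j. \<phi> \<in> End_ord s Mf j}"

definition GL0 :: "('k::comm_ring_1 \<Rightarrow> 'm::ab_group_add \<Rightarrow> 'm) \<Rightarrow> (nat \<Rightarrow> 'm set) \<Rightarrow> ('m \<Rightarrow> 'm) set" where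
  "GL0 s Mf = {g. module_hom s s g \<and> bij g \<and> (\<forall>j. g ` Mf j \<subseteq> Mf j \<and> inv g ` Mf j \<subseteq> Mf j)}"

definition GL_ord :: "('k::comm_ring_1 \<Rightarrow> 'm::ab_group_add \<Rightarrow> 'm) \<Rightarrow> (nat \<Rightarrow> 'm set) \<Rightarrow> nat \<Rightarrow> ('m \<Rightarrow> 'm) set" where
  "GL_ord s Mf i = {g \<in> GL0 s Mf. (\<lambda>x. g x - x) \<in> End_ord s Mf i \<and> (\<lambda>x. inv g x - x) \<in> End_ord s Mf i}"

definition is_subgroup_fun :: "('m \<Rightarrow> 'm) set \<Rightarrow> bool" where
  "is_subgroup_fun G \<longleftrightarrow> id \<in> G \<and> (\<forall>g\<in>G. \<forall>h\<in>G. g \<circ> h \<in> G) \<and> (\<forall>g\<in>G. inv g \<in> G)"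

definition is_End_submodule :: "('k::comm_ring_1 \<Rightarrow> 'm::ab_group_add \<Rightarrow> 'm) \<Rightarrow> ('m \<Rightarrow> 'm) set \<Rightarrow> bool" where
  "is_End_submodule s T \<longleftrightarrow> (\<lambda>x. 0) \<in> T \<and> (\<forall>\<xi>\<in>T. \<forall>\<eta>\<in>T. (\<lambda>x. \<xi> x + \<eta> x) \<in> T)
     \<and> (\<forall>c. \<forall>\<xi>\<in>T. (\<lambda>x. s c (\<xi> x)) \<in> T)"

definition pointwise_weak_Lie_type ::
  "('k::comm_ring_1 \<Rightarrow> 'm::ab_group_add \<Rightarrow> 'm) \<Rightarrow> (nat \<Rightarrow> 'm set) \<Rightarrow> ('m \<Rightarrow> 'm) set \<Rightarrow> ('m \<Rightarrow> 'm) set \<Rightarrow> bool" where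
  "pointwise_weak_Lie_type s Mf T G \<longleftrightarrow>
    (\<forall>i\<ge>1.
      (\<forall>\<xi>\<in>T \<inter> End_ord s Mf i. \<forall>z. \<exists>g\<in>G \<inter> GL_ord s Mf i.
          ordv Mf (\<xi> z) < \<infinity> \<longrightarrow>
          ordv Mf (g z - z - \<xi> z) \<ge> 2 * ordE s Mf \<xi> + ordv Mf z) \<and>
      (\<forall>g\<in>G \<inter> GL_ord s Mf i. \<forall>z. \<exists>\<xi>\<in>T \<inter> End_ord s Mf i.
          ordv Mf (g z - z) < \<infinity> \<longrightarrow>
          ordv Mf (g z - z - \<xi> z) \<ge> 2 * ordE s Mf (\<lambda>x. g x - x) + ordv Mf z))"

definition fclosure :: "(nat \<Rightarrow> 'm::ab_group_add set) \<Rightarrow> 'm set \<Rightarrow> 'm set" where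
  "fclosure Mf X = (\<Inter>j\<in>{1..}. {x + m | x m. x \<in> X \<and> m \<in> Mf j})"

end

theory Submission imports Defs begin

lemma F_mod: "filtration s Mf \<Longrightarrow> module s"
  by (simp add: filtration_def)

lemma F_anti: assumes "filtration s Mf" "i \<le> j" shows "Mf j \<subseteq> Mf i"
  using assms(2)
proof (induction j rule: dec_induct)
  case base then show ?case by simp
next
  case (step j) then show ?case using assms(1) unfolding filtration_def by blast
qed

lemma F_sub: "filtration s Mf \<Longrightarrow> module.subspace s (Mf j)"
  by (simp add: filtration_def)

lemma F_0: "filtration s Mf \<Longrightarrow> 0 \<in> Mf j"
  unfolding filtration_def using module.subspace_0[of s "Mf j"] by blast
lemma F_add: "filtration s Mf \<Longrightarrow> x \<in> Mf j \<Longrightarrow> y \<in> Mf j \<Longrightarrow> x + y \<in> Mf j"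
  by (rule module.subspace_add[OF F_mod F_sub])
lemma F_diff: "filtration s Mf \<Longrightarrow> x \<in> Mf j \<Longrightarrow> y \<in> Mf j \<Longrightarrow> x - y \<in> Mf j"
  by (rule module.subspace_diff[OF F_mod F_sub])
lemma F_neg: "filtration s Mf \<Longrightarrow> x \<in> Mf j \<Longrightarrow> - x \<in> Mf j"
  unfolding filtration_def using module.subspace_neg[of s "Mf j" x] by blast

lemma ordv_ge: assumes F: "filtration s Mf" and le: "enat p \<le> ordv Mf x" shows "x \<in> Mf p"
proof (rule ccontr)
  assume nx: "x \<notin> Mf p"
  have "Mf 0 = UNIV" using F by (simp add: filtration_def)
  then have p0: "p > 0" using nx by (cases p) auto
  have "\<forall>j. x \<in> Mf j \<longrightarrow> j < p"
  proof (intro allI impI, rule ccontr)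
    fix j assume "x \<in> Mf j" "\<not> j < p"
    then show False using F_anti[OF F, of p j] nx by auto
  qed
  then have "ordv Mf x \<le> enat (p - 1)"
    unfolding ordv_def by (intro Sup_least) auto
  then have "enat p \<le> enat (p - 1)" using le by (rule order_trans[rotated])
  then show False using p0 by simp
qed

lemma ordE_ge: "\<phi> \<in> End_ord s Mf k \<Longrightarrow> enat k \<le> ordE s Mf \<phi>"
  unfolding ordE_def by (rule Sup_upper) auto

lemma End_mem: assumes "\<phi> \<in> End_ord s Mf k" "x \<in> Mf j" shows "\<phi> x \<in> Mf (j + k)"
proof -
  have "\<phi> ` Mf j \<subseteq> Mf (j + k)" using assms(1) unfolding End_ord_def by blast
  then show ?thesis using assms(2) by blast
qed

lemma End_mono: assumes F: "filtration s Mf" and "k \<le> k'" "\<phi> \<in> End_ord s Mf k'"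
  shows "\<phi> \<in> End_ord s Mf k"
proof -
  have "\<phi> ` Mf j \<subseteq> Mf (j + k)" for j
    using assms(3) F_anti[OF F, of "j + k" "j + k'"] assms(2) unfolding End_ord_def by auto
  then show ?thesis using assms(3) unfolding End_ord_def by auto
qed

lemma End_zero: "filtration s Mf \<Longrightarrow> (\<lambda>x. 0) \<in> End_ord s Mf k"
  unfolding End_ord_def using F_0[of s Mf] F_mod[of s Mf]
  by (auto simp: module_hom_iff module.scale_zero_right)

lemma End_add: assumes F: "filtration s Mf" and "\<phi> \<in> End_ord s Mf k" "\<psi> \<in> End_ord s Mf k"
  shows "(\<lambda>x. \<phi> x + \<psi> x) \<in> End_ord s Mf k"
proof -
  have "module_hom s s (\<lambda>x. \<phi> x + \<psi> x)"
    using assms unfolding End_ord_def by (auto simp: module_hom_iff module.scale_right_distrib)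
  moreover have "\<phi> x + \<psi> x \<in> Mf (j + k)" if "x \<in> Mf j" for x j
    using End_mem[OF assms(2) that] End_mem[OF assms(3) that] F_add[OF F] by blast
  ultimately show ?thesis unfolding End_ord_def by blast
qed

lemma End_comp_shift:
  assumes F: "filtration s Mf" and g: "module_hom s s g" and h: "module_hom s s h"
    and hp: "\<forall>j. h ` Mf j \<subseteq> Mf j"
    and g1: "(\<lambda>x. g x - x) \<in> End_ord s Mf k" and h1: "(\<lambda>x. h x - x) \<in> End_ord s Mf k"
  shows "(\<lambda>x. (g \<circ> h) x - x) \<in> End_ord s Mf k"
proof -
  have mh: "module_hom s s (\<lambda>x. (g \<circ> h) x - x)"
    using g h F_mod[OF F] by (auto simp: module_hom_iff module.scale_right_diff_distrib)
  have "(g \<circ> h) x - x \<in> Mf (j + k)" if "x \<in> Mf j" for x j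
  proof -
    have "(g \<circ> h) x - x = (g (h x) - h x) + (h x - x)" by simp
    moreover have "g (h x) - h x \<in> Mf (j + k)" using End_mem[OF g1, of "h x" j] hp that by auto
    moreover have "h x - x \<in> Mf (j + k)" using End_mem[OF h1 that] by simp
    ultimately show ?thesis using F_add[OF F] by metis
  qed
  then show ?thesis using mh unfolding End_ord_def by blast
qed

lemma G_comp:
  assumes F: "filtration s Mf" and G_sub: "G \<subseteq> GL_ord s Mf 1" and G_grp: "is_subgroup_fun G"
    and g: "g \<in> G \<inter> GL_ord s Mf k" and h: "h \<in> G \<inter> GL_ord s Mf k"
  shows "g \<circ> h \<in> G \<inter> GL_ord s Mf k"
proof -
  have gh: "g \<circ> h \<in> G" using g h G_grp unfolding is_subgroup_fun_def by blast
  have ig: "inv g \<in> G" and ih: "inv h \<in> G" using g h G_grp unfolding is_subgroup_fun_def by blast+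
  have GL0: "x \<in> G \<Longrightarrow> x \<in> GL0 s Mf" for x using G_sub unfolding GL_ord_def by blast
  have bg: "bij g" and bh: "bij h" using GL0 g h unfolding GL0_def by auto
  have "(\<lambda>x. (g \<circ> h) x - x) \<in> End_ord s Mf k"
    by (rule End_comp_shift[OF F]) (use GL0 g h in \<open>auto simp: GL0_def GL_ord_def\<close>)
  moreover have "(\<lambda>x. (inv h \<circ> inv g) x - x) \<in> End_ord s Mf k"
    by (rule End_comp_shift[OF F]) (use GL0[OF ig] GL0[OF ih] GL0 g h in \<open>auto simp: GL0_def GL_ord_def\<close>)
  moreover have "inv (g \<circ> h) = inv h \<circ> inv g" using o_inv_distrib[OF bg bh] .
  ultimately show ?thesis using gh GL0[OF gh] unfolding GL_ord_def by auto
qed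

lemma G_id: fixes Mf :: "nat \<Rightarrow> 'm::ab_group_add set"
  assumes F: "filtration s Mf" shows "id \<in> GL_ord s Mf k"
proof -
  have "(\<lambda>x::'m. id x - x) = (\<lambda>x. 0)" by (simp add: fun_eq_iff)
  then show ?thesis using End_zero[OF F, of k] F_mod[OF F]
    unfolding GL_ord_def GL0_def by (auto simp: module.module_hom_id)
qed

lemma GL_mono: assumes F: "filtration s Mf" and "k \<le> k'" "g \<in> GL_ord s Mf k'"
  shows "g \<in> GL_ord s Mf k"
  using assms End_mono[OF F] unfolding GL_ord_def by blast

lemma fclosure_iff: "x \<in> fclosure Mf X \<longleftrightarrow> (\<forall>j\<ge>1. \<exists>y\<in>X. x - y \<in> Mf j)"
proof -
  have "x \<in> {y + m | y m. y \<in> X \<and> m \<in> Mf j} \<longleftrightarrow> (\<exists>y\<in>X. x - y \<in> Mf j)" for j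
  proof
    assume "x \<in> {y + m | y m. y \<in> X \<and> m \<in> Mf j}"
    then obtain y m where "x = y + m" "y \<in> X" "m \<in> Mf j" by blast
    then show "\<exists>y\<in>X. x - y \<in> Mf j" by (metis add_diff_cancel_left')
  next
    assume "\<exists>y\<in>X. x - y \<in> Mf j"
    then obtain y where "y \<in> X" "x - y \<in> Mf j" by blast
    moreover have "x = y + (x - y)" by simp
    ultimately show "x \<in> {y + m | y m. y \<in> X \<and> m \<in> Mf j}" by blast
  qed
  then show ?thesis unfolding fclosure_def by blast
qed

lemma enat_bound: assumes "enat k \<le> e" "N < k"
  shows "enat (N + k + n + 1) \<le> 2 * e + enat n"
  using assms by (cases e) (auto simp: numeral_eq_enat)

lemma Lie_i:
  assumes "pointwise_weak_Lie_type s Mf T G" "1 \<le> i"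
  shows "(\<forall>\<xi>\<in>T \<inter> End_ord s Mf i. \<forall>z. \<exists>g\<in>G \<inter> GL_ord s Mf i.
          ordv Mf (\<xi> z) < \<infinity> \<longrightarrow>
          ordv Mf (g z - z - \<xi> z) \<ge> 2 * ordE s Mf \<xi> + ordv Mf z) \<and>
      (\<forall>g\<in>G \<inter> GL_ord s Mf i. \<forall>z. \<exists>\<xi>\<in>T \<inter> End_ord s Mf i.
          ordv Mf (g z - z) < \<infinity> \<longrightarrow>
          ordv Mf (g z - z - \<xi> z) \<ge> 2 * ordE s Mf (\<lambda>x. g x - x) + ordv Mf z)"
proof -
  have "\<forall>i\<ge>1.
      (\<forall>\<xi>\<in>T \<inter> End_ord s Mf i. \<forall>z. \<exists>g\<in>G \<inter> GL_ord s Mf i.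
          ordv Mf (\<xi> z) < \<infinity> \<longrightarrow>
          ordv Mf (g z - z - \<xi> z) \<ge> 2 * ordE s Mf \<xi> + ordv Mf z) \<and>
      (\<forall>g\<in>G \<inter> GL_ord s Mf i. \<forall>z. \<exists>\<xi>\<in>T \<inter> End_ord s Mf i.
          ordv Mf (g z - z) < \<infinity> \<longrightarrow>
          ordv Mf (g z - z - \<xi> z) \<ge> 2 * ordE s Mf (\<lambda>x. g x - x) + ordv Mf z)"
    using assms(1) unfolding pointwise_weak_Lie_type_def .
  then show ?thesis using assms(2) by (elim allE[where x=i] impE)
qed

lemma Lie_a:
  assumes "pointwise_weak_Lie_type s Mf T G" "1 \<le> i" "\<xi> \<in> T \<inter> End_ord s Mf i"
  obtains g where "g \<in> G \<inter> GL_ord s Mf i" "ordv Mf (\<xi> z) < \<infinity> \<longrightarrow>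
          ordv Mf (g z - z - \<xi> z) \<ge> 2 * ordE s Mf \<xi> + ordv Mf z"
proof -
  have "\<forall>\<xi>\<in>T \<inter> End_ord s Mf i. \<forall>z. \<exists>g\<in>G \<inter> GL_ord s Mf i.
          ordv Mf (\<xi> z) < \<infinity> \<longrightarrow>
          ordv Mf (g z - z - \<xi> z) \<ge> 2 * ordE s Mf \<xi> + ordv Mf z"
    using Lie_i[OF assms(1,2)] by (rule conjunct1)
  then have "\<exists>g\<in>G \<inter> GL_ord s Mf i.
          ordv Mf (\<xi> z) < \<infinity> \<longrightarrow>
          ordv Mf (g z - z - \<xi> z) \<ge> 2 * ordE s Mf \<xi> + ordv Mf z"
    using assms(3) by (elim ballE allE[where x=z]) auto
  then show ?thesis using that by (elim bexE)
qed

lemma Lie_b: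
  assumes "pointwise_weak_Lie_type s Mf T G" "1 \<le> i" "g \<in> G \<inter> GL_ord s Mf i"
  obtains \<xi> where "\<xi> \<in> T \<inter> End_ord s Mf i" "ordv Mf (g z - z) < \<infinity> \<longrightarrow>
          ordv Mf (g z - z - \<xi> z) \<ge> 2 * ordE s Mf (\<lambda>x. g x - x) + ordv Mf z"
proof -
  have "\<forall>g\<in>G \<inter> GL_ord s Mf i. \<forall>z. \<exists>\<xi>\<in>T \<inter> End_ord s Mf i.
          ordv Mf (g z - z) < \<infinity> \<longrightarrow>
          ordv Mf (g z - z - \<xi> z) \<ge> 2 * ordE s Mf (\<lambda>x. g x - x) + ordv Mf z"
    using Lie_i[OF assms(1,2)] by (rule conjunct2)
  then have "\<exists>\<xi>\<in>T \<inter> End_ord s Mf i.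
          ordv Mf (g z - z) < \<infinity> \<longrightarrow>
          ordv Mf (g z - z - \<xi> z) \<ge> 2 * ordE s Mf (\<lambda>x. g x - x) + ordv Mf z"
    using assms(3) by (elim ballE allE[where x=z]) auto
  then show ?thesis using that by (elim bexE)
qed

lemma ordv_inf: "filtration s Mf \<Longrightarrow> ordv Mf x = \<infinity> \<Longrightarrow> x \<in> Mf p"
  using ordv_ge[of s Mf p x] by simp

lemma fclosure_get:
  assumes "x \<in> fclosure Mf X" "1 \<le> j"
  obtains y where "y \<in> X" "x - y \<in> Mf j"
  using assms unfolding fclosure_iff by blast

lemma part1_claim:
  assumes F: "filtration s Mf"
    and G_sub: "G \<subseteq> GL_ord s Mf 1" and G_grp: "is_subgroup_fun G"
    and Lie: "pointwise_weak_Lie_type s Mf T G"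
    and oz: "ordv Mf z = enat n"
    and hyp: "\<forall>k\<ge>1. fclosure Mf ((\<lambda>\<xi>. \<xi> z) ` (T \<inter> End_ord s Mf k)) \<supseteq> Mf (N + k + n)"
  shows "\<forall>k>N. \<forall>m\<in>Mf (N + k + n). \<exists>g\<in>G \<inter> GL_ord s Mf k. g z - z - m \<in> Mf (N + k + n + r)"
proof (induction r)
  case 0
  show ?case
  proof (intro allI impI ballI)
    fix k m assume "N < k" "m \<in> Mf (N + k + n)"
    moreover have "id \<in> G" using G_grp unfolding is_subgroup_fun_def by blast
    moreover have "id z - z - m = - m" by simp
    ultimately show "\<exists>g\<in>G \<inter> GL_ord s Mf k. g z - z - m \<in> Mf (N + k + n + 0)"
      using G_id[OF F, of k] F_neg[OF F, of m] by (intro bexI[of _ id]) auto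
  qed
next
  case (Suc r)
  show ?case
  proof (intro allI impI ballI)
    fix k m assume kN: "N < k" and m: "m \<in> Mf (N + k + n)"
    have k1: "1 \<le> k" using kN by simp
    have mc: "m \<in> fclosure Mf ((\<lambda>\<xi>. \<xi> z) ` (T \<inter> End_ord s Mf k))" using hyp k1 m by blast
    then obtain y where y: "y \<in> (\<lambda>\<xi>. \<xi> z) ` (T \<inter> End_ord s Mf k)" and my: "m - y \<in> Mf (N + k + n + 1)"
      using fclosure_get[OF mc, of "N + k + n + 1"] by auto
    then obtain \<xi> where \<xi>: "\<xi> \<in> T \<inter> End_ord s Mf k" and yx: "y = \<xi> z" by blast
    have m\<xi>: "m - \<xi> z \<in> Mf (N + k + n + 1)" using my yx by simp
    obtain g0 where g0: "g0 \<in> G \<inter> GL_ord s Mf k" and g0p: "ordv Mf (\<xi> z) < \<infinity> \<longrightarrow>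
          ordv Mf (g0 z - z - \<xi> z) \<ge> 2 * ordE s Mf \<xi> + ordv Mf z"
      by (rule Lie_a[OF Lie k1 \<xi>])
    have idG: "id \<in> G \<inter> GL_ord s Mf k" using G_grp G_id[OF F, of k] unfolding is_subgroup_fun_def by blast
    obtain g where g: "g \<in> G \<inter> GL_ord s Mf k" and e: "m - (g z - z) \<in> Mf (N + (k + 1) + n)"
    proof (cases "ordv Mf (\<xi> z) < \<infinity>")
      case True
      have "\<xi> \<in> End_ord s Mf k" using \<xi> by blast
      then have "enat (N + k + n + 1) \<le> 2 * ordE s Mf \<xi> + enat n"
        using enat_bound[OF ordE_ge kN] by blast
      also have "\<dots> \<le> ordv Mf (g0 z - z - \<xi> z)" using g0p True oz by simp
      finally have "g0 z - z - \<xi> z \<in> Mf (N + k + n + 1)" by (rule ordv_ge[OF F])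
      then have "(m - \<xi> z) - (g0 z - z - \<xi> z) \<in> Mf (N + k + n + 1)" using m\<xi> F_diff[OF F] by blast
      moreover have "(m - \<xi> z) - (g0 z - z - \<xi> z) = m - (g0 z - z)" by (simp add: algebra_simps)
      moreover have "N + k + n + 1 = N + (k + 1) + n" by simp
      ultimately show ?thesis using that[OF g0] by simp
    next
      case False
      then have "\<xi> z \<in> Mf (N + k + n + 1)" using ordv_inf[OF F] by auto
      then have "(m - \<xi> z) + \<xi> z \<in> Mf (N + k + n + 1)" using m\<xi> F_add[OF F] by blast
      moreover have "(m - \<xi> z) + \<xi> z = m - (id z - z)" by simp
      moreover have "N + k + n + 1 = N + (k + 1) + n" by simp
      ultimately show ?thesis using that[OF idG] by simp
    qed
    define e where "e = m - (g z - z)"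
    have gGL0: "g \<in> GL0 s Mf" using g unfolding GL_ord_def by blast
    then have gmh: "module_hom s s g" and gb: "bij g" and gp: "\<And>j. g ` Mf j \<subseteq> Mf j"
      and gip: "\<And>j. inv g ` Mf j \<subseteq> Mf j" unfolding GL0_def by auto
    have ie: "inv g e \<in> Mf (N + (k + 1) + n)" using gip e unfolding e_def by blast
    have "N < k + 1" using kN by simp
    then obtain h where h: "h \<in> G \<inter> GL_ord s Mf (k + 1)"
      and he: "h z - z - inv g e \<in> Mf (N + (k + 1) + n + r)"
      using Suc.IH[rule_format, of "k+1" "inv g e"] ie by blast
    have hk: "h \<in> G \<inter> GL_ord s Mf k" using h GL_mono[OF F, of k "k+1"] by auto
    have ghG: "g \<circ> h \<in> G \<inter> GL_ord s Mf k" by (rule G_comp[OF F G_sub G_grp g hk])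
    have gie: "g (inv g e) = e" using gb by (simp add: bij_is_surj surj_f_inv_f)
    have "g (h z - z - inv g e) = g (h z) - g z - e"
      using gie by (simp add: module_hom.diff[OF gmh])
    also have "\<dots> = (g \<circ> h) z - z - m" unfolding e_def by (simp add: algebra_simps)
    finally have eq: "(g \<circ> h) z - z - m = g (h z - z - inv g e)" by simp
    have "N + (k + 1) + n + r = N + k + n + Suc r" by simp
    then have "g (h z - z - inv g e) \<in> Mf (N + k + n + Suc r)"
      using gp he by (metis image_subset_iff)
    then show "\<exists>g\<in>G \<inter> GL_ord s Mf k. g z - z - m \<in> Mf (N + k + n + Suc r)"
      using ghG eq by (intro bexI[of _ "g \<circ> h"]) auto
  qed
qed

lemma part2_claim:
  assumes F: "filtration s Mf"
    and T_mod: "is_End_submodule s T"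
    and Lie: "pointwise_weak_Lie_type s Mf T G"
    and oz: "ordv Mf z = enat n"
    and hyp: "\<forall>k\<ge>1. fclosure Mf ((\<lambda>g. g z) ` (G \<inter> GL_ord s Mf k)) \<supseteq> {z + m | m. m \<in> Mf (N + k + n)}"
  shows "\<forall>k>N. \<forall>m\<in>Mf (N + k + n). \<exists>\<xi>\<in>T \<inter> End_ord s Mf k. m - \<xi> z \<in> Mf (N + k + n + r)"
proof (induction r)
  case 0
  show ?case
  proof (intro allI impI ballI)
    fix k m assume "N < k" "m \<in> Mf (N + k + n)"
    moreover have "(\<lambda>x. 0) \<in> T" using T_mod unfolding is_End_submodule_def by blast
    ultimately show "\<exists>\<xi>\<in>T \<inter> End_ord s Mf k. m - \<xi> z \<in> Mf (N + k + n + 0)"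
      using End_zero[OF F, of k] by (intro bexI[of _ "\<lambda>x. 0"]) auto
  qed
next
  case (Suc r)
  show ?case
  proof (intro allI impI ballI)
    fix k m assume kN: "N < k" and m: "m \<in> Mf (N + k + n)"
    have k1: "1 \<le> k" using kN by simp
    have mc: "z + m \<in> fclosure Mf ((\<lambda>g. g z) ` (G \<inter> GL_ord s Mf k))" using hyp k1 m by blast
    then obtain y where y: "y \<in> (\<lambda>g. g z) ` (G \<inter> GL_ord s Mf k)" and my: "z + m - y \<in> Mf (N + k + n + 1)"
      using fclosure_get[OF mc, of "N + k + n + 1"] by auto
    then obtain g where g: "g \<in> G \<inter> GL_ord s Mf k" and yx: "y = g z" by blast
    have mg: "z + m - g z \<in> Mf (N + k + n + 1)" using my yx by simp
    obtain \<xi>0 where \<xi>0: "\<xi>0 \<in> T \<inter> End_ord s Mf k" and \<xi>0p: "ordv Mf (g z - z) < \<infinity> \<longrightarrow>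
          ordv Mf (g z - z - \<xi>0 z) \<ge> 2 * ordE s Mf (\<lambda>x. g x - x) + ordv Mf z"
      by (rule Lie_b[OF Lie k1 g])
    have zT: "(\<lambda>x. 0) \<in> T \<inter> End_ord s Mf k" using T_mod End_zero[OF F, of k] unfolding is_End_submodule_def by blast
    obtain \<xi> where \<xi>: "\<xi> \<in> T \<inter> End_ord s Mf k" and e: "m - \<xi> z \<in> Mf (N + (k + 1) + n)"
    proof (cases "ordv Mf (g z - z) < \<infinity>")
      case True
      have "(\<lambda>x. g x - x) \<in> End_ord s Mf k" using g unfolding GL_ord_def by blast
      then have "enat (N + k + n + 1) \<le> 2 * ordE s Mf (\<lambda>x. g x - x) + enat n"
        using enat_bound[OF ordE_ge kN] by blast
      also have "\<dots> \<le> ordv Mf (g z - z - \<xi>0 z)" using \<xi>0p True oz by simp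
      finally have "g z - z - \<xi>0 z \<in> Mf (N + k + n + 1)" by (rule ordv_ge[OF F])
      then have "(z + m - g z) + (g z - z - \<xi>0 z) \<in> Mf (N + k + n + 1)" using mg F_add[OF F] by blast
      moreover have "(z + m - g z) + (g z - z - \<xi>0 z) = m - \<xi>0 z" by (simp add: algebra_simps)
      moreover have "N + k + n + 1 = N + (k + 1) + n" by simp
      ultimately show ?thesis using that[OF \<xi>0] by simp
    next
      case False
      then have "g z - z \<in> Mf (N + k + n + 1)" using ordv_inf[OF F] by auto
      then have "(z + m - g z) + (g z - z) \<in> Mf (N + k + n + 1)" using mg F_add[OF F] by blast
      moreover have "(z + m - g z) + (g z - z) = m - (\<lambda>x. 0) z" by (simp add: algebra_simps)
      moreover have "N + k + n + 1 = N + (k + 1) + n" by simp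
      ultimately show ?thesis using that[OF zT] by simp
    qed
    have "N < k + 1" using kN by simp
    then obtain \<eta> where \<eta>: "\<eta> \<in> T \<inter> End_ord s Mf (k + 1)"
      and he: "(m - \<xi> z) - \<eta> z \<in> Mf (N + (k + 1) + n + r)"
      using Suc.IH[rule_format, of "k+1" "m - \<xi> z"] e by blast
    have \<eta>k: "\<eta> \<in> End_ord s Mf k" using \<eta> End_mono[OF F, of k "k+1"] by auto
    have sT: "(\<lambda>x. \<xi> x + \<eta> x) \<in> T" using \<xi> \<eta> T_mod unfolding is_End_submodule_def by blast
    have sE: "(\<lambda>x. \<xi> x + \<eta> x) \<in> End_ord s Mf k" using End_add[OF F _ \<eta>k] \<xi> by blast
    have "N + (k + 1) + n + r = N + k + n + Suc r" by simp
    moreover have "(m - \<xi> z) - \<eta> z = m - (\<xi> z + \<eta> z)" by (simp add: algebra_simps)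
    ultimately have "m - (\<lambda>x. \<xi> x + \<eta> x) z \<in> Mf (N + k + n + Suc r)" using he by metis
    then show "\<exists>\<xi>\<in>T \<inter> End_ord s Mf k. m - \<xi> z \<in> Mf (N + k + n + Suc r)"
      using sT sE by (intro bexI[of _ "\<lambda>x. \<xi> x + \<eta> x"]) auto
  qed
qed

theorem theorem4p3:
  fixes s :: "'k::comm_ring_1 \<Rightarrow> 'm::ab_group_add \<Rightarrow> 'm"
    and Mf :: "nat \<Rightarrow> 'm set"
    and G :: "('m \<Rightarrow> 'm) set" and T :: "('m \<Rightarrow> 'm) set"
    and z :: 'm and N :: nat
  assumes filt: "filtration s Mf"
    and G_sub: "G \<subseteq> GL_ord s Mf 1" and G_grp: "is_subgroup_fun G"
    and T_sub: "T \<subseteq> End_ord s Mf 1" and T_mod: "is_End_submodule s T"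
    and Lie: "pointwise_weak_Lie_type s Mf T G"
  shows "((\<forall>k\<ge>1. fclosure Mf ((\<lambda>\<xi>. \<xi> z) ` (T \<inter> End_ord s Mf k))
                   \<supseteq> Mfe Mf (enat (N + k) + ordv Mf z))
          \<longrightarrow> (\<forall>k>N. fclosure Mf ((\<lambda>g. g z) ` (G \<inter> GL_ord s Mf k))
                   \<supseteq> {z + m | m. m \<in> Mfe Mf (enat (N + k) + ordv Mf z)}))
       \<and> ((\<forall>k\<ge>1. fclosure Mf ((\<lambda>g. g z) ` (G \<inter> GL_ord s Mf k))
                   \<supseteq> {z + m | m. m \<in> Mfe Mf (enat (N + k) + ordv Mf z)})
          \<longrightarrow> (\<forall>k>N. fclosure Mf ((\<lambda>\<xi>. \<xi> z) ` (T \<inter> End_ord s Mf k))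
                   \<supseteq> Mfe Mf (enat (N + k) + ordv Mf z)))"
proof (cases "ordv Mf z")
  case infinity
  have Mi: "Mfe Mf (enat (N + k) + ordv Mf z) = (\<Inter>j. Mf j)" for k
    using infinity by (simp add: Mfe_def)
  have idG: "id \<in> G \<inter> GL_ord s Mf k" for k
    using G_grp G_id[OF filt, of k] unfolding is_subgroup_fun_def by blast
  have zT: "(\<lambda>x. 0) \<in> T \<inter> End_ord s Mf k" for k
    using T_mod End_zero[OF filt, of k] unfolding is_End_submodule_def by blast
  have A: "fclosure Mf ((\<lambda>g. g z) ` (G \<inter> GL_ord s Mf k)) \<supseteq> {z + m | m. m \<in> Mfe Mf (enat (N + k) + ordv Mf z)}" for k
  proof
    fix x assume "x \<in> {z + m | m. m \<in> Mfe Mf (enat (N + k) + ordv Mf z)}"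
    then obtain m where x: "x = z + m" and m: "\<And>j. m \<in> Mf j" unfolding Mi by blast
    have "id z \<in> (\<lambda>g. g z) ` (G \<inter> GL_ord s Mf k)" using idG by blast
    moreover have "x - id z = m" using x by simp
    ultimately show "x \<in> fclosure Mf ((\<lambda>g. g z) ` (G \<inter> GL_ord s Mf k))"
      unfolding fclosure_iff using m by metis
  qed
  have B: "fclosure Mf ((\<lambda>\<xi>. \<xi> z) ` (T \<inter> End_ord s Mf k)) \<supseteq> Mfe Mf (enat (N + k) + ordv Mf z)" for k
  proof
    fix x assume "x \<in> Mfe Mf (enat (N + k) + ordv Mf z)"
    then have m: "\<And>j. x \<in> Mf j" unfolding Mi by blast
    have "(\<lambda>x. 0) z \<in> (\<lambda>\<xi>. \<xi> z) ` (T \<inter> End_ord s Mf k)" using zT[of k] by (rule imageI)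
    moreover have "x - (\<lambda>x. 0) z = x" by simp
    ultimately show "x \<in> fclosure Mf ((\<lambda>\<xi>. \<xi> z) ` (T \<inter> End_ord s Mf k))"
      unfolding fclosure_iff using m by metis
  qed
  show ?thesis using A B by blast
next
  case (enat n)
  have Mi: "Mfe Mf (enat (N + k) + ordv Mf z) = Mf (N + k + n)" for k
    using enat by (simp add: Mfe_def)
  show ?thesis
  proof (intro conjI impI allI)
    fix k assume hyp0: "\<forall>k\<ge>1. fclosure Mf ((\<lambda>\<xi>. \<xi> z) ` (T \<inter> End_ord s Mf k))
                   \<supseteq> Mfe Mf (enat (N + k) + ordv Mf z)" and kN: "N < k"
    have hyp: "\<forall>k\<ge>1. fclosure Mf ((\<lambda>\<xi>. \<xi> z) ` (T \<inter> End_ord s Mf k)) \<supseteq> Mf (N + k + n)"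
      using hyp0 unfolding Mi .
    note C = part1_claim[OF filt G_sub G_grp Lie enat hyp]
    show "fclosure Mf ((\<lambda>g. g z) ` (G \<inter> GL_ord s Mf k))
                   \<supseteq> {z + m | m. m \<in> Mfe Mf (enat (N + k) + ordv Mf z)}"
    proof
      fix x assume "x \<in> {z + m | m. m \<in> Mfe Mf (enat (N + k) + ordv Mf z)}"
      then obtain m where x: "x = z + m" and m: "m \<in> Mf (N + k + n)" unfolding Mi by blast
      show "x \<in> fclosure Mf ((\<lambda>g. g z) ` (G \<inter> GL_ord s Mf k))"
        unfolding fclosure_iff
      proof (intro allI impI)
        fix j :: nat assume "1 \<le> j"
        obtain g where g: "g \<in> G \<inter> GL_ord s Mf k" and gm: "g z - z - m \<in> Mf (N + k + n + j)"
          using C[rule_format, of k m j] kN m by blast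
        have "g z - z - m \<in> Mf j" using gm F_anti[OF filt, of j "N + k + n + j"] by auto
        then have "x - g z \<in> Mf j" using F_neg[OF filt, of "g z - z - m" j] x by (simp add: algebra_simps)
        then show "\<exists>y\<in>(\<lambda>g. g z) ` (G \<inter> GL_ord s Mf k). x - y \<in> Mf j" using g by blast
      qed
    qed
  next
    fix k assume hyp0: "\<forall>k\<ge>1. fclosure Mf ((\<lambda>g. g z) ` (G \<inter> GL_ord s Mf k))
                   \<supseteq> {z + m | m. m \<in> Mfe Mf (enat (N + k) + ordv Mf z)}" and kN: "N < k"
    have hyp: "\<forall>k\<ge>1. fclosure Mf ((\<lambda>g. g z) ` (G \<inter> GL_ord s Mf k)) \<supseteq> {z + m | m. m \<in> Mf (N + k + n)}"
      using hyp0 unfolding Mi .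
    note C = part2_claim[OF filt T_mod Lie enat hyp]
    show "fclosure Mf ((\<lambda>\<xi>. \<xi> z) ` (T \<inter> End_ord s Mf k)) \<supseteq> Mfe Mf (enat (N + k) + ordv Mf z)"
    proof
      fix m assume "m \<in> Mfe Mf (enat (N + k) + ordv Mf z)"
      then have m: "m \<in> Mf (N + k + n)" unfolding Mi .
      show "m \<in> fclosure Mf ((\<lambda>\<xi>. \<xi> z) ` (T \<inter> End_ord s Mf k))"
        unfolding fclosure_iff
      proof (intro allI impI)
        fix j :: nat assume "1 \<le> j"
        obtain \<xi> where \<xi>: "\<xi> \<in> T \<inter> End_ord s Mf k" and gm: "m - \<xi> z \<in> Mf (N + k + n + j)"
          using C[rule_format, of k m j] kN m by blast
        have "m - \<xi> z \<in> Mf j" using gm F_anti[OF filt, of j "N + k + n + j"] by auto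
        then show "\<exists>y\<in>(\<lambda>\<xi>. \<xi> z) ` (T \<inter> End_ord s Mf k). m - y \<in> Mf j" using \<xi> by blast
      qed
    qed
  qed
qed

end
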